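(* For every bracket pattern $w$, $A(w)=\bigcup_{w'\in\langle\!\langle w\rangle\!\rangle}w'$, and this set belongs to $\langle\!\langle w\rangle\!\rangle$.
   Context: $\mathbb N=\{1,2,\dots\}$, $\mathbb N_0=\mathbb N\cup\{0\}$. A bracket pattern is a non-empty finite subset $w\subseteq\mathbb N$; $\|w\|:=\max(w)$. For bracket patterns $w,w'$: superposition $w\cup w'$; for $j\in w$ the projection $\cap_j w:=\{i\in w\mid i\le j\}$; the dual $w^\dagger:=\{\|w\|-i\mid i\in\mathbb N_0,\ i<\|w\|,\ i\notin w\}$. A bracket pattern category is a set of bracket patterns closed under superposition, duals and projections; $\langle\!\langle w\rangle\!\rangle$ denotes the smallest bracket pattern category containing $w$. The completion of a bracket pattern $w$ is $A(w):=\{j-i\mid j\in w,\ i\in\mathbb N_0,\ i\notin w,\ i<j\}$. *)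

theory Defs
  imports Main
begin

definition bracket_pattern :: "nat set \<Rightarrow> bool" where
  "bracket_pattern w \<longleftrightarrow> w \<noteq> {} \<and> finite w \<and> 0 \<notin> w"

definition bnorm :: "nat set \<Rightarrow> nat" where
  "bnorm w = Max w"

definition proj :: "nat \<Rightarrow> nat set \<Rightarrow> nat set" where
  "proj j w = {i \<in> w. i \<le> j}"

definition bdual :: "nat set \<Rightarrow> nat set" where
  "bdual w = {bnorm w - i | i. i < bnorm w \<and> i \<notin> w}"

definition bp_category :: "nat set set \<Rightarrow> bool" where
  "bp_category C \<longleftrightarrow>
     (\<forall>w\<in>C. bracket_pattern w) \<and>
     (\<forall>w\<in>C. \<forall>w'\<in>C. w \<union> w' \<in> C) \<and>
     (\<forall>w\<in>C. bdual w \<in> C) \<and>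
     (\<forall>w\<in>C. \<forall>j\<in>w. proj j w \<in> C)"

definition generated :: "nat set \<Rightarrow> nat set set" where
  "generated w = \<Inter> {C. bp_category C \<and> w \<in> C}"

definition completion :: "nat set \<Rightarrow> nat set" where
  "completion w = {j - i | j i. j \<in> w \<and> i \<notin> w \<and> i < j}"

end

theory Submission
  imports Defs
begin

lemma bdual_bp:
  assumes "bracket_pattern v" shows "bracket_pattern (bdual v)"
proof -
  have "bnorm v \<in> bdual v" using assms unfolding bdual_def bracket_pattern_def bnorm_def
    by (smt (verit, best) Max_in diff_zero gr0I mem_Collect_eq)
  moreover have "bdual v \<subseteq> {..bnorm v}" unfolding bdual_def by auto
  moreover have "0 \<notin> bdual v" unfolding bdual_def by auto
  ultimately show ?thesis unfolding bracket_pattern_def using finite_subset by blast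
qed

lemma proj_bp:
  assumes "bracket_pattern v" "j \<in> v" shows "bracket_pattern (proj j v)"
  using assms unfolding bracket_pattern_def proj_def by auto

lemma union_bp:
  assumes "bracket_pattern v" "bracket_pattern u" shows "bracket_pattern (v \<union> u)"
  using assms unfolding bracket_pattern_def by auto

lemma all_cat: "bp_category {v. bracket_pattern v}"
  unfolding bp_category_def using bdual_bp proj_bp union_bp by auto

lemma inter_cat:
  assumes "F \<noteq> {}" "\<And>C. C \<in> F \<Longrightarrow> bp_category C" shows "bp_category (\<Inter>F)"
proof -
  obtain C0 where "C0 \<in> F" using assms(1) by blast
  then have "\<forall>w\<in>\<Inter>F. bracket_pattern w" using assms(2) unfolding bp_category_def by blast
  moreover have "\<forall>w\<in>\<Inter>F. \<forall>w'\<in>\<Inter>F. w \<union> w' \<in> \<Inter>F"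
    using assms(2) unfolding bp_category_def by (simp add: Inter_iff)
  moreover have "\<forall>w\<in>\<Inter>F. bdual w \<in> \<Inter>F"
    using assms(2) unfolding bp_category_def by (simp add: Inter_iff)
  moreover have "\<forall>w\<in>\<Inter>F. \<forall>j\<in>w. proj j w \<in> \<Inter>F"
    using assms(2) unfolding bp_category_def by (simp add: Inter_iff)
  ultimately show ?thesis unfolding bp_category_def by blast
qed

lemma gen_cat:
  assumes "bracket_pattern w" shows "bp_category (generated w)"
proof -
  have ne: "{C. bp_category C \<and> w \<in> C} \<noteq> {}" using all_cat assms by blast
  show ?thesis unfolding generated_def by (rule inter_cat[OF ne]) simp
qed

lemma gen_in: "w \<in> generated w" unfolding generated_def by blast

lemma gen_sub: "bp_category C \<Longrightarrow> w \<in> C \<Longrightarrow> generated w \<subseteq> C"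
  unfolding generated_def by blast

lemma sub_completion: "bracket_pattern v \<Longrightarrow> v \<subseteq> completion v"
  unfolding completion_def bracket_pattern_def
  by (smt (verit, best) diff_zero gr0I mem_Collect_eq subsetI)

lemma completion_proj: "completion (proj j v) \<subseteq> completion v"
  unfolding completion_def proj_def by fastforce

lemma completion_union: "completion (v \<union> u) \<subseteq> completion v \<union> completion u"
  unfolding completion_def by blast

lemma completion_dual:
  assumes "bracket_pattern v" shows "completion (bdual v) \<subseteq> completion v"
proof
  fix x assume "x \<in> completion (bdual v)"
  then obtain a m where a: "a \<in> bdual v" and m: "m \<notin> bdual v" "m < a" and x: "x = a - m"
    unfolding completion_def by blast
  let ?n = "bnorm v"
  obtain i where i: "a = ?n - i" "i < ?n" "i \<notin> v" using a unfolding bdual_def by blast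
  have nv: "?n \<in> v" using assms unfolding bnorm_def bracket_pattern_def by simp
  define k where "k = ?n - m"
  have mle: "m < ?n" using m i by simp
  have kv: "k \<in> v"
  proof (cases "m = 0")
    case True then show ?thesis using nv k_def by simp
  next
    case False
    show ?thesis
    proof (rule ccontr)
      assume "k \<notin> v"
      moreover have "k < ?n" using False mle k_def by simp
      moreover have "?n - k = m" using mle k_def by simp
      ultimately have "m \<in> bdual v" unfolding bdual_def by blast
      then show False using m by simp
    qed
  qed
  have "i < k" using i m mle k_def by simp
  moreover have "x = k - i" using x i k_def mle m by simp
  ultimately show "x \<in> completion v" using kv i unfolding completion_def by blast
qed

lemma bound_cat:
  "bp_category {v. bracket_pattern v \<and> completion v \<subseteq> completion w}"
  unfolding bp_category_def
proof (intro conjI ballI)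
  fix v u assume "v \<in> {v. bracket_pattern v \<and> completion v \<subseteq> completion w}"
     "u \<in> {v. bracket_pattern v \<and> completion v \<subseteq> completion w}"
  then show "v \<union> u \<in> {v. bracket_pattern v \<and> completion v \<subseteq> completion w}"
    using union_bp completion_union by blast
next
  fix v assume "v \<in> {v. bracket_pattern v \<and> completion v \<subseteq> completion w}"
  then show "bdual v \<in> {v. bracket_pattern v \<and> completion v \<subseteq> completion w}"
    using bdual_bp completion_dual by blast
next
  fix v j assume "v \<in> {v. bracket_pattern v \<and> completion v \<subseteq> completion w}" "j \<in> v"
  then show "proj j v \<in> {v. bracket_pattern v \<and> completion v \<subseteq> completion w}"
    using proj_bp completion_proj by blast
qed auto

lemma bnorm_proj:
  assumes "finite v" "j \<in> v" shows "bnorm (proj j v) = j"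
  unfolding bnorm_def proj_def using assms by (intro Max_eqI) auto

lemma completion_eq:
  assumes "bracket_pattern w"
  shows "completion w = (\<Union>j\<in>w. bdual (proj j w))"
proof -
  have fin: "finite w" using assms bracket_pattern_def by simp
  have "bdual (proj j w) = {j - i | i. i < j \<and> i \<notin> w}" if "j \<in> w" for j
    using bnorm_proj[OF fin that] unfolding bdual_def proj_def by auto
  then show ?thesis unfolding completion_def by blast
qed

lemma union_closed:
  assumes "bp_category C" "finite S" "S \<noteq> {}" "S \<subseteq> C" shows "\<Union>S \<in> C"
  using assms(2,3,4)
proof (induction S rule: finite_ne_induct)
  case (singleton x) then show ?case by simp
next
  case (insert x F)
  then show ?case using assms(1) unfolding bp_category_def by simp
qed

theorem lemma7p8:
  assumes "bracket_pattern w"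
  shows "completion w = \<Union> (generated w) \<and> completion w \<in> generated w"
proof -
  have cat: "bp_category (generated w)" using gen_cat[OF assms] .
  have fin: "finite w" "w \<noteq> {}" using assms bracket_pattern_def by auto
  have S: "(\<lambda>j. bdual (proj j w)) ` w \<subseteq> generated w"
    using cat gen_in unfolding bp_category_def by blast
  have mem: "completion w \<in> generated w"
    unfolding completion_eq[OF assms]
    using union_closed[OF cat _ _ S] fin by simp
  have "generated w \<subseteq> {v. bracket_pattern v \<and> completion v \<subseteq> completion w}"
    by (rule gen_sub[OF bound_cat]) (use assms in simp)
  then have "\<Union> (generated w) \<subseteq> completion w" using sub_completion by blast
  moreover have "completion w \<subseteq> \<Union> (generated w)" using mem by blast
  ultimately show ?thesis using mem by blast
qed

end
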